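(* Let $k\ge 3$ and $p=2^k$. In the $k$-dimensional Poisson regression model with complete interactions, let $\boldsymbol{\beta}$ have intercept $\beta_0=0$, main effects $\beta_1=\dots=\beta_k=-1$, and all interaction parameters $\beta_{ij},\dots,\beta_{12\dots k}$ equal to $0$. Then the design which assigns equal weights $1/p$ to the $2^k$ settings of the full factorial $\{0,2\}^k$ is locally $D$-optimal at $\boldsymbol{\beta}$ on $\mathcal{X}=[0,\infty)^k$.
   Context: In the $k$-dimensional Poisson regression model with complete interactions, an observation at $\mathbf{x}=(x_1,\dots,x_k)$ is Poisson distributed with mean $\lambda(\mathbf{x})=\exp(\mathbf{f}(\mathbf{x})^\top\boldsymbol{\beta})$, where $\mathbf{f}(\mathbf{x})$ consists of all $2^k$ monomials $\prod_{j\in S}x_j$, $S\subseteq\{1,\dots,k\}$, so that $\mathbf{f}(\mathbf{x})^\top\boldsymbol{\beta}=\beta_0+\sum_j\beta_jx_j+\sum_{i<j}\beta_{ij}x_ix_j+\dots+\beta_{12\dots k}x_1x_2\cdots x_k$. A design $\xi$ is a finite collection of distinct settings $\mathbf{x}_i\in\mathcal{X}$ with weights $w_i\ge0$ summing to $1$; its information matrix is $\mathbf{M}_{\boldsymbol{\beta}}(\xi)=\sum_i w_i\lambda(\mathbf{x}_i)\mathbf{f}(\mathbf{x}_i)\mathbf{f}(\mathbf{x}_i)^\top$. A design is locally $D$-optimal at $\boldsymbol{\beta}$ on $\mathcal{X}$ if it maximizes $\det\mathbf{M}_{\boldsymbol{\beta}}(\xi)$ over all designs on $\mathcal{X}$.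 *)

theory Defs
  imports Main "Jordan_Normal_Form.Determinant"
begin

text \<open>The 2^k regression functions are indexed by m < 2^k, where m encodes the subset
  S_m = {j < k. bit m j} of {0..k-1}; f_m(x) = prod of x!j over j in S_m.\<close>

definition monset :: "nat \<Rightarrow> nat \<Rightarrow> nat set" where
  "monset k m = {j. j < k \<and> bit m j}"

definition fmon :: "nat \<Rightarrow> nat \<Rightarrow> real list \<Rightarrow> real" where
  "fmon k m x = (\<Prod>j\<in>monset k m. x ! j)"

definition intensity :: "nat \<Rightarrow> (nat \<Rightarrow> real) \<Rightarrow> real list \<Rightarrow> real" where
  "intensity k \<beta> x = exp (\<Sum>m<2^k. \<beta> m * fmon k m x)"

definition info_mat :: "nat \<Rightarrow> (nat \<Rightarrow> real) \<Rightarrow> real list set \<Rightarrow> (real list \<Rightarrow> real) \<Rightarrow> real mat" where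
  "info_mat k \<beta> S w = mat (2^k) (2^k)
     (\<lambda>(i, j). \<Sum>x\<in>S. w x * intensity k \<beta> x * fmon k i x * fmon k j x)"

definition is_design :: "nat \<Rightarrow> real list set \<Rightarrow> real list set \<Rightarrow> (real list \<Rightarrow> real) \<Rightarrow> bool" where
  "is_design k X S w \<longleftrightarrow> finite S \<and> S \<subseteq> X \<and> (\<forall>x\<in>S. length x = k)
     \<and> (\<forall>x\<in>S. w x \<ge> 0) \<and> (\<Sum>x\<in>S. w x) = 1"

definition locally_D_optimal ::
  "nat \<Rightarrow> (nat \<Rightarrow> real) \<Rightarrow> real list set \<Rightarrow> real list set \<Rightarrow> (real list \<Rightarrow> real) \<Rightarrow> bool" where
  "locally_D_optimal k \<beta> X S w \<longleftrightarrow> is_design k X S w \<and>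
     (\<forall>S' w'. is_design k X S' w' \<longrightarrow> det (info_mat k \<beta> S' w') \<le> det (info_mat k \<beta> S w))"

definition nonneg_orthant :: "nat \<Rightarrow> real list set" where
  "nonneg_orthant k = {x. length x = k \<and> (\<forall>j<k. x ! j \<ge> 0)}"

definition full_factorial :: "nat \<Rightarrow> real \<Rightarrow> real list set" where
  "full_factorial k a = {x. length x = k \<and> (\<forall>j<k. x ! j = 0 \<or> x ! j = a)}"

end

theory Submission
  imports Defs
begin

definition gphi :: "real \<Rightarrow> real" where
  "gphi t = ((1 - t/2)^2 + exp 2 * t^2 / 4) * exp (- t)"

lemma gphi_deriv:
  "(gphi has_real_derivative (- exp (- t) * (t - 2) * ((1 + exp 2) * t / 4 - 1))) (at t)"
proof -
  have "(gphi has_real_derivative ((2 * (1 - t/2) * (- 1/2) + exp 2 * (2 * t) / 4) * exp (- t)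
        + ((1 - t/2)^2 + exp 2 * t^2 / 4) * (exp (- t) * (- 1)))) (at t)"
    unfolding gphi_def
    by (auto intro!: derivative_eq_intros)
  moreover have "(2 * (1 - t/2) * (- 1/2) + exp 2 * (2 * t) / 4) * exp (- t)
        + ((1 - t/2)^2 + exp 2 * t^2 / 4) * (exp (- t) * (- 1))
     = - exp (- t) * (t - 2) * ((1 + exp 2) * t / 4 - 1)"
    by (simp add: field_simps power2_eq_square)
  ultimately show ?thesis by simp
qed

lemma gphi_le1:
  assumes "t \<ge> 0" shows "gphi t \<le> 1"
proof -
  define r :: real where "r = 4 / (1 + exp 2)"
  have e1: "exp 2 \<ge> (1::real)" by simp
  have r2: "r \<le> 2" unfolding r_def using e1 by (auto simp: divide_le_eq) (smt (verit) exp_gt_zero)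
  have rpos: "r > 0" unfolding r_def by (simp add: add_pos_pos)
  have g0: "gphi 0 = 1" unfolding gphi_def by simp
  have g2: "gphi 2 = 1" unfolding gphi_def by (simp add: exp_minus field_simps)
  have key: "(1 + exp 2) * x / 4 - 1 \<le> 0 \<longleftrightarrow> x \<le> r" for x
    unfolding r_def by (simp add: field_simps add_pos_pos)
  have key2: "(1 + exp 2) * x / 4 - 1 \<ge> 0 \<longleftrightarrow> r \<le> x" for x
    unfolding r_def by (simp add: field_simps add_pos_pos)
  consider "t \<le> r" | "r \<le> t" "t \<le> 2" | "2 \<le> t" by linarith
  then show ?thesis
  proof cases
    case 1
    have "gphi t \<le> gphi 0"
    proof (rule DERIV_nonpos_imp_nonincreasing[OF assms])
      fix x assume x: "0 \<le> x" "x \<le> t"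
      have a: "x - 2 \<le> 0" using x 1 r2 by linarith
      have b: "(1 + exp 2) * x / 4 - 1 \<le> 0" using key x 1 by simp
      have "0 \<le> (x - 2) * ((1 + exp 2) * x / 4 - 1)" using a b by (simp add: mult_nonpos_nonpos)
      then have "- exp (- x) * (x - 2) * ((1 + exp 2) * x / 4 - 1) \<le> 0"
        by (simp add: mult.assoc)
      then show "\<exists>y. (gphi has_real_derivative y) (at x) \<and> y \<le> 0"
        using gphi_deriv by blast
    qed
    then show ?thesis using g0 by simp
  next
    case 2
    have "gphi t \<le> gphi 2"
    proof (rule DERIV_nonneg_imp_nondecreasing[OF 2(2)])
      fix x assume x: "t \<le> x" "x \<le> 2"
      have a: "x - 2 \<le> 0" using x by linarith
      have b: "(1 + exp 2) * x / 4 - 1 \<ge> 0" using key2[of x] x 2 by linarith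
      have "(x - 2) * ((1 + exp 2) * x / 4 - 1) \<le> 0" using a b by (simp add: mult_nonpos_nonneg)
      then have "- exp (- x) * (x - 2) * ((1 + exp 2) * x / 4 - 1) \<ge> 0"
        by (simp add: mult.assoc mult_nonneg_nonpos)
      then show "\<exists>y. (gphi has_real_derivative y) (at x) \<and> y \<ge> 0"
        using gphi_deriv by blast
    qed
    then show ?thesis using g2 by simp
  next
    case 3
    have "gphi t \<le> gphi 2"
    proof (rule DERIV_nonpos_imp_nonincreasing[OF 3])
      fix x assume x: "2 \<le> x" "x \<le> t"
      have a: "x - 2 \<ge> 0" using x by linarith
      have b: "(1 + exp 2) * x / 4 - 1 \<ge> 0" using key2[of x] x r2 by linarith
      have "0 \<le> (x - 2) * ((1 + exp 2) * x / 4 - 1)" using a b by simp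
      then have "- exp (- x) * (x - 2) * ((1 + exp 2) * x / 4 - 1) \<le> 0"
        by (simp add: mult.assoc)
      then show "\<exists>y. (gphi has_real_derivative y) (at x) \<and> y \<le> 0"
        using gphi_deriv by blast
    qed
    then show ?thesis using g2 by simp
  qed
qed

definition psdq :: "nat \<Rightarrow> real mat \<Rightarrow> bool" where
  "psdq n A \<longleftrightarrow> (\<forall>v. 0 \<le> (\<Sum>i<n. \<Sum>j<n. v i * A $$ (i,j) * v j))"

lemma sum_pt1: fixes p n :: nat shows "p < n \<Longrightarrow> (\<Sum>j<n. g j * (if j = p then s else 0)) = g p * (s::real)"
proof -
  assume p: "p < n"
  have "(\<Sum>j<n. g j * (if j = p then s else 0)) = (\<Sum>j<n. if j = p then g p * s else 0)"
    by (rule sum.cong) auto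
  also have "\<dots> = g p * s" using p by (subst sum.delta) auto
  finally show ?thesis .
qed

lemma sum_pt1': fixes p n :: nat shows "p < n \<Longrightarrow> (\<Sum>j<n. (if j = p then s else 0) * g j) = g p * (s::real)"
  using sum_pt1[of p n g s] by (simp add: mult.commute)

lemma sum_pt2: fixes p n q :: nat shows "p < n \<Longrightarrow> q < n \<Longrightarrow> p \<noteq> q \<Longrightarrow>
   (\<Sum>j<n. g j * (if j = p then s else if j = q then t else 0)) = g p * s + g q * (t::real)"
proof -
  assume p: "p < n" and q: "q < n" and pq: "p \<noteq> q"
  have "(\<Sum>j<n. g j * (if j = p then s else if j = q then t else 0))
      = (\<Sum>j<n. (if j = p then g p * s else 0) + (if j = q then g q * t else 0))"
    by (rule sum.cong) (auto simp: pq)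
  also have "\<dots> = g p * s + g q * t" using p q by (simp add: sum.distrib sum.delta)
  finally show ?thesis .
qed

lemma sum_pt2': fixes p n q :: nat shows "p < n \<Longrightarrow> q < n \<Longrightarrow> p \<noteq> q \<Longrightarrow>
   (\<Sum>j<n. (if j = p then s else if j = q then t else 0) * g j) = g p * s + g q * (t::real)"
  using sum_pt2[of p n q g s t] by (simp add: mult.commute)

lemma psdq_diag: assumes "psdq n A" "i < n" shows "0 \<le> A $$ (i,i)"
proof -
  define v where "v = (\<lambda>l::nat. if l = i then (1::real) else 0)"
  have "0 \<le> (\<Sum>i'<n. \<Sum>j<n. v i' * A $$ (i',j) * v j)" using assms(1) unfolding psdq_def by blast
  also have "\<dots> = (\<Sum>i'<n. v i' * A $$ (i',i))"
    by (rule sum.cong[OF refl]) (simp add: v_def sum_pt1[OF assms(2)])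
  also have "\<dots> = A $$ (i,i)" unfolding v_def using sum_pt1'[OF assms(2)] by simp
  finally show ?thesis .
qed

lemma psdq_zero_row:
  assumes "psdq n A" "p < n" "q < n" "A $$ (p,p) = 0" "A $$ (p,q) = A $$ (q,p)"
  shows "A $$ (p,q) = 0"
proof (cases "p = q")
  case True then show ?thesis using assms by simp
next
  case pq: False
  have quad: "0 \<le> 2 * s * A $$ (p,q) + A $$ (q,q)" for s
  proof -
    define v where "v = (\<lambda>l::nat. if l = p then s else if l = q then 1 else 0)"
    have vs: "(\<Sum>j<n. g j * v j) = g p * s + g q" for g
      unfolding v_def using sum_pt2[OF assms(2,3) pq, of g s 1] by simp
    have "0 \<le> (\<Sum>i'<n. \<Sum>j<n. v i' * A $$ (i',j) * v j)" using assms(1) unfolding psdq_def by blast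
    also have "\<dots> = (\<Sum>i'<n. v i' * (A $$ (i',p) * s + A $$ (i',q)))"
    proof (rule sum.cong[OF refl])
      fix i' assume "i' \<in> {..<n}"
      have "(\<Sum>j<n. v i' * A $$ (i',j) * v j) = v i' * A $$ (i',p) * s + v i' * A $$ (i',q)"
        using vs[of "\<lambda>j. v i' * A $$ (i',j)"] by simp
      then show "(\<Sum>j<n. v i' * A $$ (i',j) * v j) = v i' * (A $$ (i',p) * s + A $$ (i',q))"
        by (simp add: algebra_simps)
    qed
    also have "\<dots> = (A $$ (p,p) * s + A $$ (p,q)) * s + (A $$ (q,p) * s + A $$ (q,q))"
      using vs[of "\<lambda>i'. (A $$ (i',p) * s + A $$ (i',q))"] by (simp add: mult.commute)
    also have "\<dots> = 2 * s * A $$ (p,q) + A $$ (q,q)" using assms(4,5) by (simp add: algebra_simps)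
    finally show ?thesis .
  qed
  show ?thesis
  proof (rule ccontr)
    assume ne: "A $$ (p,q) \<noteq> 0"
    have "0 \<le> 2 * (- (A $$ (q,q) + 1) / (2 * A $$ (p,q))) * A $$ (p,q) + A $$ (q,q)" by (rule quad)
    also have "\<dots> = -1" using ne by (simp add: field_simps)
    finally show False by simp
  qed
qed


lemma hadamard_psd:
  fixes A :: "real mat"
  assumes "A \<in> carrier_mat n n" "\<And>i j. i < n \<Longrightarrow> j < n \<Longrightarrow> A $$ (i,j) = A $$ (j,i)" "psdq n A"
  shows "det A \<le> (\<Prod>i<n. A $$ (i,i))"
  using assms
proof (induction n arbitrary: A)
  case 0
  have "det A = prod_list (diag_mat A)"
    by (rule det_upper_triangular[OF _ 0(1)]) (use 0(1) in \<open>auto simp: upper_triangular_def\<close>)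
  also have "\<dots> = 1" using 0(1) by (simp add: diag_mat_def)
  finally show ?case by simp
next
  case (Suc n)
  note A = Suc.prems(1) and sym = Suc.prems(2) and psd = Suc.prems(3)
  define a where "a = A $$ (0,0)"
  have a0: "a \<ge> 0" unfolding a_def using psdq_diag[OF psd] by simp
  have diagnn: "0 \<le> (\<Prod>i<Suc n. A $$ (i,i))"
    by (rule prod_nonneg) (use psdq_diag[OF psd] in auto)
  show ?case
  proof (cases "a = 0")
    case True
    have row0: "A $$ (0,j) = 0" if "j < Suc n" for j
      using psdq_zero_row[OF psd _ that] True sym[of 0 j] that unfolding a_def by simp
    have "det A = (\<Sum>j<Suc n. A $$ (0,j) * cofactor A 0 j)"
      by (rule laplace_expansion_row[OF A]) simp
    also have "\<dots> = 0" using row0 by simp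
    finally show ?thesis using diagnn by simp
  next
    case False
    then have apos: "a > 0" using a0 by simp
    define E where "E = mat (Suc n) (Suc n) (\<lambda>(i,j). if i = j then 1 else if j = 0 then - A $$ (i,0) / a else 0)"
    define B where "B = mat n n (\<lambda>(i,j). A $$ (Suc i,Suc j) - A $$ (Suc i,0) * A $$ (0,Suc j) / a)"
    have E: "E \<in> carrier_mat (Suc n) (Suc n)" unfolding E_def by simp
    have Bc: "B \<in> carrier_mat n n" unfolding B_def by simp
    have detE: "det E = 1"
    proof -
      have "det E = prod_list (diag_mat E)"
        by (rule det_lower_triangular[OF _ E]) (auto simp: E_def)
      also have "diag_mat E = map (\<lambda>i. 1) [0..<Suc n]"
        unfolding diag_mat_def E_def by simp
      also have "prod_list (map (\<lambda>i. 1::real) [0..<Suc n]) = 1"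
        by (induction n) auto
      finally show ?thesis .
    qed
    have EA: "(E * A) $$ (i,j) = (if i = 0 then A $$ (0,j) else A $$ (i,j) - A $$ (i,0) * A $$ (0,j) / a)"
      if ij: "i < Suc n" "j < Suc n" for i j
    proof -
      have "(E * A) $$ (i,j) = (\<Sum>l<Suc n. E $$ (i,l) * A $$ (l,j))"
        using ij A E by (simp add: scalar_prod_def atLeast0LessThan)
      also have "\<dots> = (if i = 0 then A $$ (0,j) else A $$ (i,j) - A $$ (i,0) * A $$ (0,j) / a)"
      proof (cases "i = 0")
        case True
        have "(\<Sum>l<Suc n. E $$ (i,l) * A $$ (l,j)) = (\<Sum>l<Suc n. (if l = 0 then 1 else 0) * A $$ (l,j))"
          by (rule sum.cong[OF refl]) (auto simp: E_def True)
        also have "\<dots> = A $$ (0,j)" using sum_pt1'[of 0 "Suc n" 1 "\<lambda>l. A $$ (l,j)"] by simp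
        finally show ?thesis using True by simp
      next
        case False
        have "(\<Sum>l<Suc n. E $$ (i,l) * A $$ (l,j))
            = (\<Sum>l<Suc n. (if l = i then 1 else if l = 0 then - A $$ (i,0) / a else 0) * A $$ (l,j))"
          by (rule sum.cong[OF refl]) (auto simp: E_def ij)
        also have "\<dots> = A $$ (i,j) - A $$ (i,0) * A $$ (0,j) / a"
          using sum_pt2'[of i "Suc n" 0 1 "- A $$ (i,0) / a" "\<lambda>l. A $$ (l,j)"] ij False by simp
        finally show ?thesis using False by simp
      qed
      finally show ?thesis .
    qed
    have EAc: "E * A \<in> carrier_mat (Suc n) (Suc n)" using E A by simp
    have del: "mat_delete (E * A) 0 0 = B"
    proof (rule eq_matI)
      fix i j assume "i < dim_row B" "j < dim_col B"
      then have ij: "i < n" "j < n" using Bc by auto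
      show "mat_delete (E * A) 0 0 $$ (i, j) = B $$ (i, j)"
      proof -
        have "mat_delete (E * A) 0 0 $$ (i, j) = (E * A) $$ (Suc i, Suc j)"
          using mat_delete_index[OF EAc, of 0 0 i j] ij by simp
        also have "\<dots> = B $$ (i, j)"
          unfolding EA[of "Suc i" "Suc j", OF Suc_mono[OF ij(1)] Suc_mono[OF ij(2)]]
          using ij by (simp add: B_def)
        finally show ?thesis .
      qed
    qed (use EAc Bc in auto)
    have "det A = det (E * A)" using det_mult[OF E A] detE by simp
    also have "\<dots> = (\<Sum>i<Suc n. (E * A) $$ (i,0) * cofactor (E * A) i 0)"
      by (rule laplace_expansion_column[OF EAc]) simp
    also have "\<dots> = (E * A) $$ (0,0) * cofactor (E * A) 0 0"
    proof -
      have "(E * A) $$ (Suc i,0) = 0" if "i < n" for i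
        using EA[of "Suc i" 0] that apos sym[of "Suc i" 0] by (simp add: a_def)
      then show ?thesis by (simp add: sum.lessThan_Suc_shift del: sum.lessThan_Suc)
    qed
    also have "\<dots> = a * det B" using EA[of 0 0] del by (simp add: cofactor_def a_def)
    finally have detA: "det A = a * det B" .
    have Bsym: "B $$ (i,j) = B $$ (j,i)" if "i < n" "j < n" for i j
      using that sym[of "Suc i" "Suc j"] sym[of "Suc i" 0] sym[of 0 "Suc j"] by (simp add: B_def)
    have Bpsd: "psdq n B"
      unfolding psdq_def
    proof
      fix v :: "nat \<Rightarrow> real"
      define c where "c = (\<Sum>j<n. A $$ (0,Suc j) * v j)"
      define w where "w = (\<lambda>l. if l = 0 then - c / a else v (l - 1))"
      define VAV where "VAV = (\<Sum>i<n. \<Sum>j<n. v i * A $$ (Suc i,Suc j) * v j)"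
      have c': "(\<Sum>i<n. v i * A $$ (Suc i,0)) = c"
        unfolding c_def by (rule sum.cong[OF refl]) (use sym in auto)
      have "(\<Sum>i<Suc n. \<Sum>j<Suc n. w i * A $$ (i,j) * w j)
          = (w 0 * A $$ (0,0) * w 0 + (\<Sum>j<n. w 0 * A $$ (0,Suc j) * w (Suc j)))
            + (\<Sum>i<n. w (Suc i) * A $$ (Suc i,0) * w 0 + (\<Sum>j<n. w (Suc i) * A $$ (Suc i,Suc j) * w (Suc j)))"
        by (simp add: sum.lessThan_Suc_shift del: sum.lessThan_Suc)
      also have "\<dots> = (c/a * a * (c/a) - c/a * c) + (- (c/a) * (\<Sum>i<n. v i * A $$ (Suc i,0)) + VAV)"
      proof -
        have w0: "w 0 = - (c/a)" and wS: "\<And>j. w (Suc j) = v j" by (simp_all add: w_def)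
        have t2: "(\<Sum>j<n. w 0 * A $$ (0,Suc j) * w (Suc j)) = - (c/a) * c"
          unfolding w0 wS c_def sum_distrib_left by (rule sum.cong[OF refl]) simp
        have t3: "(\<Sum>i<n. w (Suc i) * A $$ (Suc i,0) * w 0 + (\<Sum>j<n. w (Suc i) * A $$ (Suc i,Suc j) * w (Suc j)))
           = - (c/a) * (\<Sum>i<n. v i * A $$ (Suc i,0)) + VAV"
          unfolding w0 wS VAV_def sum.distrib sum_distrib_left by (simp add: algebra_simps)
        show ?thesis by (subst t2, subst t3) (simp add: w0 a_def)
      qed
      also have "\<dots> = VAV - c * c / a"
      proof -
        have "c / a * a * (c / a) = c * c / a" using apos by simp
        then show ?thesis unfolding c' by (simp add: algebra_simps)
      qed
      finally have QA: "(\<Sum>i<Suc n. \<Sum>j<Suc n. w i * A $$ (i,j) * w j) = VAV - c * c / a" .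
      have "(\<Sum>i<n. \<Sum>j<n. v i * B $$ (i,j) * v j)
          = (\<Sum>i<n. \<Sum>j<n. v i * A $$ (Suc i,Suc j) * v j - (v i * A $$ (Suc i,0)) * (A $$ (0,Suc j) * v j) / a)"
        by (rule sum.cong[OF refl], rule sum.cong[OF refl]) (simp add: B_def algebra_simps)
      also have "\<dots> = VAV - (\<Sum>i<n. v i * A $$ (Suc i,0)) * c / a"
        by (simp add: VAV_def c_def sum_subtractf sum_product sum_divide_distrib)
      also have "\<dots> = VAV - c * c / a" using c' by simp
      finally have "(\<Sum>i<n. \<Sum>j<n. v i * B $$ (i,j) * v j) = (\<Sum>i<Suc n. \<Sum>j<Suc n. w i * A $$ (i,j) * w j)"
        using QA by simp
      also have "\<dots> \<ge> 0" using psd unfolding psdq_def by blast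
      finally show "0 \<le> (\<Sum>i<n. \<Sum>j<n. v i * B $$ (i,j) * v j)" .
    qed
    have IH: "det B \<le> (\<Prod>i<n. B $$ (i,i))" by (rule Suc.IH[OF Bc Bsym Bpsd])
    have "(\<Prod>i<n. B $$ (i,i)) \<le> (\<Prod>i<n. A $$ (Suc i,Suc i))"
    proof (rule prod_mono)
      fix i assume i: "i \<in> {..<n}"
      have "0 \<le> A $$ (0,Suc i) * A $$ (0,Suc i) / a" using apos by simp
      then have "B $$ (i,i) \<le> A $$ (Suc i,Suc i)" using i sym[of "Suc i" 0] by (simp add: B_def)
      then show "0 \<le> B $$ (i,i) \<and> B $$ (i,i) \<le> A $$ (Suc i,Suc i)"
        using psdq_diag[OF Bpsd] i by simp
    qed
    then have PM: "a * (\<Prod>i<n. B $$ (i,i)) \<le> a * (\<Prod>i<n. A $$ (Suc i,Suc i))"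
      by (rule mult_left_mono) (use apos in simp)
    have "det A \<le> a * (\<Prod>i<n. B $$ (i,i))"
      unfolding detA by (rule mult_left_mono[OF IH]) (use apos in simp)
    also have "\<dots> \<le> a * (\<Prod>i<n. A $$ (Suc i,Suc i))" by (rule PM)
    also have "\<dots> = (\<Prod>i<Suc n. A $$ (i,i))"
      by (simp add: prod.lessThan_Suc_shift a_def del: prod.lessThan_Suc)
    finally show ?thesis .
  qed
qed

lemma nobit_high: fixes m :: nat assumes "m < 2^k" "k \<le> j" shows "\<not> bit m j"
proof -
  have "(2::nat)^k \<le> 2^j" by (rule power_increasing[OF assms(2)]) simp
  then have "m < 2^j" using assms(1) by linarith
  then have "m div 2^j = 0" by simp
  then show ?thesis by (simp add: bit_iff_odd)
qed

lemma monset_sub: "monset k m \<subseteq> {..<k}" unfolding monset_def by auto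

lemma monset_inj: "inj_on (monset k) {..<2^k}"
proof (rule inj_onI)
  fix a b assume a: "a \<in> {..<2^k}" and b: "b \<in> {..<2^k}" and eq: "monset k a = monset k b"
  show "a = b"
  proof (rule bit_eqI)
    fix n
    show "bit a n = bit b n"
    proof (cases "n < k")
      case True
      then show ?thesis using eq unfolding monset_def set_eq_iff by blast
    next
      case False
      then show ?thesis using nobit_high[of a k n] nobit_high[of b k n] a b by auto
    qed
  qed
qed

lemma monset_image: "monset k ` {..<2^k} = Pow {..<k}"
proof (rule card_subset_eq)
  show "finite (Pow {..<k::nat})" by simp
  show "monset k ` {..<2^k} \<subseteq> Pow {..<k}" using monset_sub by auto
  show "card (monset k ` {..<2^k}) = card (Pow {..<k::nat})"
    using card_image[OF monset_inj[of k]] by (simp add: card_Pow)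
qed

lemma monset_bij: "bij_betw (monset k) {..<2^k} (Pow {..<k})"
  unfolding bij_betw_def using monset_inj monset_image by blast

lemma monset_0: "monset k 0 = {}" unfolding monset_def by simp

lemma monset_pow: "j < k \<Longrightarrow> monset k (2^j) = {j}"
  unfolding monset_def by (auto simp: bit_exp_iff)

lemma intensity_eq:
  fixes k :: nat and \<beta> :: "nat \<Rightarrow> real"
  assumes "\<beta> 0 = 0"
    and "\<And>j. j < k \<Longrightarrow> \<beta> (2 ^ j) = -1"
    and "\<And>m. m < 2 ^ k \<Longrightarrow> card (monset k m) \<ge> 2 \<Longrightarrow> \<beta> m = 0"
  shows "intensity k \<beta> x = (\<Prod>j<k. exp (- (x ! j)))"
proof -
  define I where "I = (\<lambda>j. (2::nat)^j) ` {..<k}"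
  have IK: "I \<subseteq> {..<2^k}" unfolding I_def by auto
  have injp: "inj_on (\<lambda>j. (2::nat)^j) {..<k}" by (auto intro: inj_onI)
  have zero: "\<beta> m * fmon k m x = 0" if m: "m \<in> {..<2^k} - I" for m
  proof -
    have mk: "m < 2^k" using m by simp
    consider "card (monset k m) = 0" | "card (monset k m) = 1" | "card (monset k m) \<ge> 2" by linarith
    then show ?thesis
    proof cases
      case 1
      then have "monset k m = monset k 0" using monset_0 finite_subset[OF monset_sub] by auto
      then have "m = 0" using inj_onD[OF monset_inj[of k], of m 0] mk by simp
      then show ?thesis using assms(1) by simp
    next
      case 2
      then obtain j where j: "monset k m = {j}" by (auto simp: card_Suc_eq)
      then have jk: "j < k" using monset_sub[of k m] by auto
      then have "monset k m = monset k (2^j)" using j monset_pow by simp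
      then have "m = 2^j" using inj_onD[OF monset_inj[of k], of m "2^j"] mk jk by simp
      then have "m \<in> I" unfolding I_def using jk by simp
      then show ?thesis using m by simp
    next
      case 3 then show ?thesis using assms(3)[OF mk] by simp
    qed
  qed
  have "(\<Sum>m<2^k. \<beta> m * fmon k m x) = (\<Sum>m\<in>I. \<beta> m * fmon k m x)"
    by (rule sum.mono_neutral_right[OF _ IK]) (use zero in auto)
  also have "\<dots> = (\<Sum>j<k. \<beta> (2^j) * fmon k (2^j) x)"
    unfolding I_def by (rule sum.reindex[OF injp, unfolded comp_def])
  also have "\<dots> = (\<Sum>j<k. - (x ! j))"
    by (rule sum.cong[OF refl]) (simp add: assms(2) fmon_def monset_pow)
  finally show ?thesis unfolding intensity_def
    using exp_sum[OF finite_lessThan, of "\<lambda>j. - (x ! j)" k] by simp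
qed


definition hT :: "nat \<Rightarrow> nat set \<Rightarrow> real list \<Rightarrow> real" where
  "hT k T x = (\<Prod>j<k. if j \<in> T then x ! j / 2 else 1 - x ! j / 2)"

lemma prod_split_sub:
  fixes f g :: "nat \<Rightarrow> real"
  assumes "T \<subseteq> {..<k}"
  shows "(\<Prod>j<k. if j \<in> T then f j else g j) = (\<Prod>j\<in>T. f j) * (\<Prod>j\<in>{..<k}-T. g j)"
proof -
  have "(\<Prod>j<k. if j \<in> T then f j else g j) = prod f ({..<k} \<inter> {j. j \<in> T}) * prod g ({..<k} \<inter> - {j. j \<in> T})"
    by (rule prod.If_cases) simp
  also have "{..<k} \<inter> {j. j \<in> T} = T" using assms by auto
  also have "{..<k} \<inter> - {j. j \<in> T} = {..<k} - T" by auto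
  finally show ?thesis .
qed

lemma hT_split: "T \<subseteq> {..<k} \<Longrightarrow> hT k T x = (\<Prod>j\<in>T. x ! j / 2) * (\<Prod>j\<in>{..<k}-T. 1 - x ! j / 2)"
  unfolding hT_def by (rule prod_split_sub)

lemma expand:
  assumes S: "S \<subseteq> {..<k}"
  shows "(\<Prod>j\<in>S. x ! j) = (\<Sum>T\<in>Pow {..<k}. (if S \<subseteq> T then 2 ^ card S else 0) * hT k T x)"
proof -
  define u where "u = (\<lambda>j. (if j \<in> S then 2 else 1) * (x ! j / 2 :: real))"
  define v where "v = (\<lambda>j. (if j \<in> S then 0 else 1) * (1 - x ! j / 2 :: real))"
  have "(\<Prod>j\<in>S. x ! j) = (\<Prod>j<k. if j \<in> S then x ! j else 1)"
    using prod_split_sub[OF S, of "\<lambda>j. x ! j" "\<lambda>j. 1"] by simp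
  also have "\<dots> = (\<Prod>j<k. u j + v j)"
    by (rule prod.cong[OF refl]) (simp add: u_def v_def)
  also have "\<dots> = (\<Sum>T\<in>Pow {..<k}. (\<Prod>j\<in>T. u j) * (\<Prod>j\<in>{..<k}-T. v j))"
    by (rule prod_add) simp
  also have "\<dots> = (\<Sum>T\<in>Pow {..<k}. (if S \<subseteq> T then 2 ^ card S else 0) * hT k T x)"
  proof (rule sum.cong[OF refl])
    fix T assume T: "T \<in> Pow {..<k}"
    then have Tk: "T \<subseteq> {..<k}" by simp
    have fT: "finite T" using finite_subset[OF Tk] by simp
    have pu: "(\<Prod>j\<in>T. u j) = (\<Prod>j\<in>T. (if j \<in> S then 2 else 1::real)) * (\<Prod>j\<in>T. x ! j / 2)"
      unfolding u_def by (rule prod.distrib)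
    have pv: "(\<Prod>j\<in>{..<k}-T. v j) = (\<Prod>j\<in>{..<k}-T. (if j \<in> S then 0 else 1::real)) * (\<Prod>j\<in>{..<k}-T. 1 - x ! j / 2)"
      unfolding v_def by (rule prod.distrib)
    show "(\<Prod>j\<in>T. u j) * (\<Prod>j\<in>{..<k}-T. v j) = (if S \<subseteq> T then 2 ^ card S else 0) * hT k T x"
    proof (cases "S \<subseteq> T")
      case True
      have a: "(\<Prod>j\<in>T. (if j \<in> S then 2 else 1::real)) = 2 ^ card S"
      proof -
        have "(\<Prod>j\<in>T. (if j \<in> S then 2 else 1::real)) = (\<Prod>j\<in>S. 2)"
          by (rule prod.mono_neutral_cong_right[OF fT True]) auto
        then show ?thesis by simp
      qed
      have b: "(\<Prod>j\<in>{..<k}-T. (if j \<in> S then 0 else 1::real)) = 1"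
        by (rule prod.neutral) (use True in auto)
      show ?thesis unfolding pu pv a b hT_split[OF Tk] using True by simp
    next
      case False
      then obtain j where j: "j \<in> S" "j \<notin> T" by auto
      have b: "(\<Prod>j\<in>{..<k}-T. (if j \<in> S then 0 else 1::real)) = 0"
        by (rule prod_zero) (use j S in auto)
      show ?thesis unfolding pv b using False by simp
    qed
  qed
  finally show ?thesis .
qed

lemma fmon_expand:
  "fmon k i x = (\<Sum>m<2^k. (if monset k i \<subseteq> monset k m then 2 ^ card (monset k i) else 0) * hT k (monset k m) x)"
proof -
  have "fmon k i x = (\<Sum>T\<in>Pow {..<k}. (if monset k i \<subseteq> T then 2 ^ card (monset k i) else 0) * hT k T x)"
    unfolding fmon_def by (rule expand[OF monset_sub])
  also have "\<dots> = (\<Sum>m<2^k. (if monset k i \<subseteq> monset k m then 2 ^ card (monset k i) else 0) * hT k (monset k m) x)"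
    by (rule sum.reindex_bij_betw[OF monset_bij, symmetric])
  finally show ?thesis .
qed

lemma sq_expand:
  "(\<Sum>m<2^k. hT k (monset k m) x ^ 2 * exp 2 ^ card (monset k m))
   = (\<Prod>j<k. exp 2 * (x ! j / 2)^2 + (1 - x ! j / 2)^2)"
proof -
  have "(\<Prod>j<k. exp 2 * (x ! j / 2)^2 + (1 - x ! j / 2)^2)
      = (\<Sum>T\<in>Pow {..<k}. (\<Prod>j\<in>T. exp 2 * (x ! j / 2)^2) * (\<Prod>j\<in>{..<k}-T. (1 - x ! j / 2)^2))"
    by (rule prod_add) simp
  also have "\<dots> = (\<Sum>T\<in>Pow {..<k}. hT k T x ^ 2 * exp 2 ^ card T)"
  proof (rule sum.cong[OF refl])
    fix T assume "T \<in> Pow {..<k}"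
    then have Tk: "T \<subseteq> {..<k}" by simp
    show "(\<Prod>j\<in>T. exp 2 * (x ! j / 2)^2) * (\<Prod>j\<in>{..<k}-T. (1 - x ! j / 2)^2) = hT k T x ^ 2 * exp 2 ^ card T"
      unfolding hT_split[OF Tk] power_mult_distrib prod.distrib prod_power_distrib by simp
  qed
  also have "\<dots> = (\<Sum>m<2^k. hT k (monset k m) x ^ 2 * exp 2 ^ card (monset k m))"
    by (rule sum.reindex_bij_betw[OF monset_bij, symmetric])
  finally show ?thesis by simp
qed


lemma prod_list_upt: "prod_list (map f [0..<n]) = (\<Prod>i<n. f i)"
  by (induction n) (auto simp: lessThan_Suc mult.commute)

lemma amgm_ln:
  fixes r :: "nat \<Rightarrow> real"
  assumes "finite A" "\<And>a. a \<in> A \<Longrightarrow> r a \<ge> 0" "(\<Sum>a\<in>A. r a) \<le> real (card A)"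
  shows "(\<Prod>a\<in>A. r a) \<le> 1"
proof (cases "\<exists>a\<in>A. r a = 0")
  case True
  then have "(\<Prod>a\<in>A. r a) = 0" using assms(1) by (auto intro: prod_zero)
  then show ?thesis by simp
next
  case False
  then have pos: "\<And>a. a \<in> A \<Longrightarrow> r a > 0" using assms(2) by (metis less_eq_real_def)
  have P: "(\<Prod>a\<in>A. r a) > 0" using pos by (simp add: prod_pos)
  have "ln (\<Prod>a\<in>A. r a) = (\<Sum>a\<in>A. ln (r a))"
    by (rule ln_prod[OF assms(1)]) (use pos in force)
  also have "\<dots> \<le> (\<Sum>a\<in>A. r a - 1)"
    by (rule sum_mono) (use pos ln_le_minus_one in blast)
  also have "\<dots> = (\<Sum>a\<in>A. r a) - real (card A)" by (simp add: sum_subtractf)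
  also have "\<dots> \<le> 0" using assms(3) by simp
  finally show ?thesis using P by simp
qed

lemma triple:
  fixes c :: "real list \<Rightarrow> real" and p q :: "nat \<Rightarrow> real"
  shows "(\<Sum>x\<in>S. c x * (\<Sum>a<n. p a * h a x) * (\<Sum>b<n. q b * h b x))
       = (\<Sum>b<n. (\<Sum>a<n. p a * (\<Sum>x\<in>S. c x * h a x * h b x)) * q b)"
proof -
  have "(\<Sum>b<n. (\<Sum>a<n. p a * (\<Sum>x\<in>S. c x * h a x * h b x)) * q b)
      = (\<Sum>b<n. \<Sum>a<n. \<Sum>x\<in>S. p a * (c x * h a x * h b x) * q b)"
    by (simp add: sum_distrib_left sum_distrib_right)
  also have "\<dots> = (\<Sum>a<n. \<Sum>b<n. \<Sum>x\<in>S. p a * (c x * h a x * h b x) * q b)"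
    by (rule sum.swap)
  also have "\<dots> = (\<Sum>a<n. \<Sum>x\<in>S. \<Sum>b<n. p a * (c x * h a x * h b x) * q b)"
    by (rule sum.cong[OF refl], rule sum.swap)
  also have "\<dots> = (\<Sum>x\<in>S. \<Sum>a<n. \<Sum>b<n. p a * (c x * h a x * h b x) * q b)"
    by (rule sum.swap)
  also have "\<dots> = (\<Sum>x\<in>S. c x * (\<Sum>a<n. p a * h a x) * (\<Sum>b<n. q b * h b x))"
  proof (rule sum.cong[OF refl])
    fix x
    have sp: "(\<Sum>a<n. p a * h a x) * (\<Sum>b<n. q b * h b x) = (\<Sum>a<n. \<Sum>b<n. (p a * h a x) * (q b * h b x))"
      by (rule sum_product)
    have "c x * (\<Sum>a<n. p a * h a x) * (\<Sum>b<n. q b * h b x) = c x * ((\<Sum>a<n. p a * h a x) * (\<Sum>b<n. q b * h b x))"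
      by (rule mult.assoc)
    also have "\<dots> = c x * (\<Sum>a<n. \<Sum>b<n. (p a * h a x) * (q b * h b x))" unfolding sp ..
    also have "\<dots> = (\<Sum>a<n. \<Sum>b<n. c x * ((p a * h a x) * (q b * h b x)))"
      by (simp add: sum_distrib_left)
    also have "\<dots> = (\<Sum>a<n. \<Sum>b<n. p a * (c x * h a x * h b x) * q b)"
      by (simp add: algebra_simps)
    finally show "(\<Sum>a<n. \<Sum>b<n. p a * (c x * h a x * h b x) * q b) = c x * (\<Sum>a<n. p a * h a x) * (\<Sum>b<n. q b * h b x)"
      by simp
  qed
  finally show ?thesis by simp
qed

definition Pm :: "nat \<Rightarrow> real mat" where
  "Pm k = mat (2^k) (2^k) (\<lambda>(i,m). if monset k i \<subseteq> monset k m then 2 ^ card (monset k i) else 0)"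

definition Hm :: "nat \<Rightarrow> (nat \<Rightarrow> real) \<Rightarrow> real list set \<Rightarrow> (real list \<Rightarrow> real) \<Rightarrow> real mat" where
  "Hm k \<beta> S w = mat (2^k) (2^k) (\<lambda>(a,b). \<Sum>x\<in>S. w x * intensity k \<beta> x * hT k (monset k a) x * hT k (monset k b) x)"

lemma info_factor: "info_mat k \<beta> S w = Pm k * Hm k \<beta> S w * transpose_mat (Pm k)"
proof (rule eq_matI)
  fix i j assume "i < dim_row (Pm k * Hm k \<beta> S w * transpose_mat (Pm k))"
    "j < dim_col (Pm k * Hm k \<beta> S w * transpose_mat (Pm k))"
  then have ij: "i < 2^k" "j < 2^k" by (auto simp: Pm_def)
  define c where "c = (\<lambda>x. w x * intensity k \<beta> x)"
  define h where "h = (\<lambda>a x. hT k (monset k a) x)"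
  define p where "p = (\<lambda>a. Pm k $$ (i,a))"
  define q where "q = (\<lambda>b. Pm k $$ (j,b))"
  have fi: "fmon k i x = (\<Sum>a<2^k. p a * h a x)" for x
    unfolding fmon_expand[of k i x] p_def h_def Pm_def
    by (rule sum.cong[OF refl]) (use ij in simp)
  have fj: "fmon k j x = (\<Sum>b<2^k. q b * h b x)" for x
    unfolding fmon_expand[of k j x] q_def h_def Pm_def
    by (rule sum.cong[OF refl]) (use ij in simp)
  have "info_mat k \<beta> S w $$ (i,j) = (\<Sum>x\<in>S. c x * (\<Sum>a<2^k. p a * h a x) * (\<Sum>b<2^k. q b * h b x))"
    unfolding info_mat_def using ij by (simp add: fi[symmetric] fj[symmetric] c_def mult.assoc)
  also have "\<dots> = (\<Sum>b<2^k. (\<Sum>a<2^k. p a * (\<Sum>x\<in>S. c x * h a x * h b x)) * q b)"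
    by (rule triple)
  also have "\<dots> = (Pm k * Hm k \<beta> S w * transpose_mat (Pm k)) $$ (i,j)"
    using ij by (simp add: Pm_def Hm_def scalar_prod_def atLeast0LessThan p_def q_def h_def c_def mult.assoc)
  finally show "info_mat k \<beta> S w $$ (i,j) = (Pm k * Hm k \<beta> S w * transpose_mat (Pm k)) $$ (i,j)" .
qed (auto simp: info_mat_def Pm_def)

lemma det_factor: "det (info_mat k \<beta> S w) = det (Pm k) * det (Hm k \<beta> S w) * det (Pm k)"
proof -
  have P: "Pm k \<in> carrier_mat (2^k) (2^k)" and H: "Hm k \<beta> S w \<in> carrier_mat (2^k) (2^k)"
    by (auto simp: Pm_def Hm_def)
  have PH: "Pm k * Hm k \<beta> S w \<in> carrier_mat (2^k) (2^k)" using P H by simp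
  have PT: "transpose_mat (Pm k) \<in> carrier_mat (2^k) (2^k)" using P by simp
  show ?thesis unfolding info_factor det_mult[OF PH PT] det_mult[OF P H] det_transpose[OF P] ..
qed

lemma Hm_psd:
  assumes "\<And>x. x \<in> S \<Longrightarrow> w x \<ge> 0"
  shows "psdq (2^k) (Hm k \<beta> S w)"
  unfolding psdq_def
proof
  fix v :: "nat \<Rightarrow> real"
  define c where "c = (\<lambda>x. w x * intensity k \<beta> x)"
  define h where "h = (\<lambda>a x. hT k (monset k a) x)"
  have "(\<Sum>i<2^k. \<Sum>j<2^k. v i * Hm k \<beta> S w $$ (i,j) * v j)
      = (\<Sum>j<2^k. (\<Sum>i<2^k. v i * (\<Sum>x\<in>S. c x * h i x * h j x)) * v j)"
    by (subst sum.swap) (simp add: Hm_def c_def h_def sum_distrib_right mult.assoc)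
  also have "\<dots> = (\<Sum>x\<in>S. c x * (\<Sum>a<2^k. v a * h a x) * (\<Sum>b<2^k. v b * h b x))"
    by (rule triple[symmetric])
  also have "\<dots> \<ge> 0"
  proof (rule sum_nonneg)
    fix x assume x: "x \<in> S"
    have "c x \<ge> 0" unfolding c_def intensity_def using assms[OF x] by simp
    then show "0 \<le> c x * (\<Sum>a<2^k. v a * h a x) * (\<Sum>b<2^k. v b * h b x)"
      by (simp add: mult.assoc)
  qed
  finally show "0 \<le> (\<Sum>i<2^k. \<Sum>j<2^k. v i * Hm k \<beta> S w $$ (i,j) * v j)" .
qed


definition pt :: "nat \<Rightarrow> nat set \<Rightarrow> real list" where
  "pt k T = map (\<lambda>j. if j \<in> T then 2 else 0) [0..<k]"

lemma pt_in: "pt k T \<in> full_factorial k 2"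
  unfolding pt_def full_factorial_def by auto

lemma pt_inj: "T \<subseteq> {..<k} \<Longrightarrow> U \<subseteq> {..<k} \<Longrightarrow> pt k T = pt k U \<Longrightarrow> T = U"
proof -
  assume T: "T \<subseteq> {..<k}" and U: "U \<subseteq> {..<k}" and eq: "pt k T = pt k U"
  have "j \<in> T \<longleftrightarrow> j \<in> U" if j: "j < k" for j
    using arg_cong[OF eq, of "\<lambda>l. l ! j"] j by (auto simp: pt_def split: if_splits)
  then show "T = U" using T U by blast
qed

lemma hT_ff:
  assumes x: "x \<in> full_factorial k 2" and T: "T \<subseteq> {..<k}"
  shows "hT k T x = (if x = pt k T then 1 else 0)"
proof (cases "x = pt k T")
  case True
  have "hT k T x = (\<Prod>j<k. 1)"
    unfolding hT_def True by (rule prod.cong[OF refl]) (auto simp: pt_def)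
  then show ?thesis using True by simp
next
  case False
  have lx: "length x = k" using x by (simp add: full_factorial_def)
  obtain j where j: "j < k" "x ! j \<noteq> pt k T ! j"
    using False lx by (metis length_map length_upt minus_nat.diff_0 nth_equalityI pt_def)
  have Z: "(if j \<in> T then x ! j / 2 else 1 - x ! j / 2) = 0"
    using j x by (auto simp: pt_def full_factorial_def)
  have "\<exists>a\<in>{..<k}. (if a \<in> T then x ! a / 2 else 1 - x ! a / 2) = 0"
    using j(1) Z by blast
  then have "hT k T x = 0" unfolding hT_def by (intro prod_zero) auto
  then show ?thesis using False by simp
qed

lemma ff_finite: "finite (full_factorial k 2)" and ff_card: "card (full_factorial k 2) = 2^k"
proof -
  have eq: "full_factorial k 2 = {xs. set xs \<subseteq> {0, 2::real} \<and> length xs = k}"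
    unfolding full_factorial_def by (auto simp: set_conv_nth)
  show "finite (full_factorial k 2)" unfolding eq by (rule finite_lists_length_eq) simp
  show "card (full_factorial k 2) = 2^k" unfolding eq by (subst card_lists_length_eq) (simp_all add: numeral_2_eq_2)
qed

lemma intensity_pt:
  assumes I: "\<And>x. intensity k \<beta> x = (\<Prod>j<k. exp (- (x ! j)))" and T: "T \<subseteq> {..<k}"
  shows "intensity k \<beta> (pt k T) = exp (-2) ^ card T"
proof -
  have "intensity k \<beta> (pt k T) = (\<Prod>j<k. if j \<in> T then exp (-2) else 1)"
    unfolding I by (rule prod.cong[OF refl]) (auto simp: pt_def)
  also have "\<dots> = (\<Prod>j\<in>T. exp (-2)) * (\<Prod>j\<in>{..<k}-T. 1)" by (rule prod_split_sub[OF T])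
  finally show ?thesis by simp
qed

lemma Hstar:
  assumes I: "\<And>x. intensity k \<beta> x = (\<Prod>j<k. exp (- (x ! j)))" and ab: "a < 2^k" "b < 2^k"
  shows "Hm k \<beta> (full_factorial k 2) (\<lambda>x. 1 / 2^k) $$ (a,b)
       = (if a = b then exp (-2) ^ card (monset k a) / 2^k else 0)"
proof -
  let ?F = "full_factorial k 2"
  let ?A = "monset k a" and ?B = "monset k b"
  have "Hm k \<beta> ?F (\<lambda>x. 1 / 2^k) $$ (a,b)
      = (\<Sum>x\<in>?F. 1 / 2^k * intensity k \<beta> x * hT k ?A x * hT k ?B x)"
    using ab by (simp add: Hm_def)
  also have "\<dots> = (\<Sum>x\<in>?F. if x = pt k ?A then (if a = b then 1 / 2^k * intensity k \<beta> (pt k ?A) else 0) else 0)"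
  proof (rule sum.cong[OF refl])
    fix x assume x: "x \<in> ?F"
    have eqAB: "pt k ?A = pt k ?B \<longleftrightarrow> a = b"
      using pt_inj[OF monset_sub monset_sub, of k a b] inj_onD[OF monset_inj[of k], of a b] ab by auto
    show "1 / 2^k * intensity k \<beta> x * hT k ?A x * hT k ?B x
        = (if x = pt k ?A then (if a = b then 1 / 2^k * intensity k \<beta> (pt k ?A) else 0) else 0)"
      unfolding hT_ff[OF x monset_sub] hT_ff[OF x monset_sub] using eqAB by auto
  qed
  also have "\<dots> = (if a = b then 1 / 2^k * intensity k \<beta> (pt k ?A) else 0)"
    using ff_finite pt_in by (subst sum.delta) auto
  also have "\<dots> = (if a = b then exp (-2) ^ card (monset k a) / 2^k else 0)"
    using intensity_pt[OF I monset_sub] by simp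
  finally show ?thesis .
qed

lemma det_Hstar:
  assumes I: "\<And>x. intensity k \<beta> x = (\<Prod>j<k. exp (- (x ! j)))"
  shows "det (Hm k \<beta> (full_factorial k 2) (\<lambda>x. 1 / 2^k)) = (\<Prod>a<2^k. exp (-2) ^ card (monset k a) / 2^k)"
proof -
  let ?H = "Hm k \<beta> (full_factorial k 2) (\<lambda>x. 1 / 2^k)"
  have C: "?H \<in> carrier_mat (2^k) (2^k)" by (simp add: Hm_def)
  have "det ?H = prod_list (diag_mat ?H)"
    by (rule det_upper_triangular[OF _ C]) (use Hstar[OF I] C in \<open>auto simp: upper_triangular_def\<close>)
  also have "\<dots> = (\<Prod>a<2^k. ?H $$ (a,a))" unfolding diag_mat_def using C by (simp add: prod_list_upt)
  also have "\<dots> = (\<Prod>a<2^k. exp (-2) ^ card (monset k a) / 2^k)"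
    by (rule prod.cong[OF refl]) (simp add: Hstar[OF I])
  finally show ?thesis .
qed

lemma ratio_sum:
  assumes I: "\<And>x. intensity k \<beta> x = (\<Prod>j<k. exp (- (x ! j)))"
    and D: "is_design k (nonneg_orthant k) S w"
  shows "(\<Sum>a<2^k. Hm k \<beta> S w $$ (a,a) * (2^k * exp 2 ^ card (monset k a))) \<le> 2^k"
proof -
  have fin: "finite S" and SX: "S \<subseteq> nonneg_orthant k" and w0: "\<And>x. x \<in> S \<Longrightarrow> w x \<ge> 0"
    and w1: "(\<Sum>x\<in>S. w x) = 1" using D unfolding is_design_def by auto
  have "(\<Sum>a<2^k. Hm k \<beta> S w $$ (a,a) * (2^k * exp 2 ^ card (monset k a)))
      = (\<Sum>a<2^k. \<Sum>x\<in>S. w x * 2^k * intensity k \<beta> x * (hT k (monset k a) x ^ 2 * exp 2 ^ card (monset k a)))"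
    by (rule sum.cong[OF refl]) (simp add: Hm_def sum_distrib_left sum_distrib_right power2_eq_square mult_ac)
  also have "\<dots> = (\<Sum>x\<in>S. \<Sum>a<2^k. w x * 2^k * intensity k \<beta> x * (hT k (monset k a) x ^ 2 * exp 2 ^ card (monset k a)))"
    by (rule sum.swap)
  also have "\<dots> = (\<Sum>x\<in>S. w x * 2^k * (\<Prod>j<k. gphi (x ! j)))"
  proof (rule sum.cong[OF refl])
    fix x
    have "(\<Sum>a<2^k. w x * 2^k * intensity k \<beta> x * (hT k (monset k a) x ^ 2 * exp 2 ^ card (monset k a)))
        = w x * 2^k * intensity k \<beta> x * (\<Prod>j<k. exp 2 * (x ! j / 2)^2 + (1 - x ! j / 2)^2)"
      unfolding sq_expand[symmetric] by (simp add: sum_distrib_left)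
    moreover have "intensity k \<beta> x * (\<Prod>j<k. exp 2 * (x ! j / 2)^2 + (1 - x ! j / 2)^2) = (\<Prod>j<k. gphi (x ! j))"
      unfolding I prod.distrib[symmetric] gphi_def
      by (rule prod.cong[OF refl]) (simp add: power_divide algebra_simps)
    ultimately show "(\<Sum>a<2^k. w x * 2^k * intensity k \<beta> x * (hT k (monset k a) x ^ 2 * exp 2 ^ card (monset k a)))
        = w x * 2^k * (\<Prod>j<k. gphi (x ! j))" by (simp add: mult.assoc)
  qed
  also have "\<dots> \<le> (\<Sum>x\<in>S. w x * 2^k)"
  proof (rule sum_mono)
    fix x assume x: "x \<in> S"
    have nn: "\<And>j. j < k \<Longrightarrow> x ! j \<ge> 0" using SX x by (auto simp: nonneg_orthant_def)
    have "(\<Prod>j<k. gphi (x ! j)) \<le> 1"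
      by (rule prod_le_1) (use nn gphi_le1 in \<open>auto simp: gphi_def\<close>)
    then show "w x * 2^k * (\<Prod>j<k. gphi (x ! j)) \<le> w x * 2^k"
      using w0[OF x] by (simp add: mult_left_le)
  qed
  also have "\<dots> = 2^k" using w1 by (simp add: sum_distrib_right[symmetric])
  finally show ?thesis .
qed


theorem theorem4:
  fixes k :: nat and \<beta> :: "nat \<Rightarrow> real"
  assumes "k \<ge> 3"
    and "\<beta> 0 = 0"
    and "\<And>j. j < k \<Longrightarrow> \<beta> (2 ^ j) = -1"
    and "\<And>m. m < 2 ^ k \<Longrightarrow> card (monset k m) \<ge> 2 \<Longrightarrow> \<beta> m = 0"
  shows "locally_D_optimal k \<beta> (nonneg_orthant k) (full_factorial k 2) (\<lambda>x. 1 / 2 ^ k)"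
proof -
  have I: "\<And>x. intensity k \<beta> x = (\<Prod>j<k. exp (- (x ! j)))"
    by (rule intensity_eq[OF assms(2-4)])
  let ?F = "full_factorial k 2" and ?u = "\<lambda>x::real list. 1 / (2::real) ^ k"
  have des: "is_design k (nonneg_orthant k) ?F ?u"
    unfolding is_design_def
  proof (intro conjI)
    show "finite ?F" by (rule ff_finite)
    show "?F \<subseteq> nonneg_orthant k"
      unfolding full_factorial_def nonneg_orthant_def by force
    show "\<forall>x\<in>?F. length x = k" unfolding full_factorial_def by simp
    show "\<forall>x\<in>?F. 0 \<le> 1 / (2::real) ^ k" by simp
    show "(\<Sum>x\<in>?F. 1 / (2::real) ^ k) = 1" using ff_card[of k] by simp
  qed
  have main: "det (info_mat k \<beta> S' w') \<le> det (info_mat k \<beta> ?F ?u)"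
    if D: "is_design k (nonneg_orthant k) S' w'" for S' w'
  proof -
    let ?H = "Hm k \<beta> S' w'"
    define Dg where "Dg = (\<lambda>a. exp (-2) ^ card (monset k a) / (2::real)^k)"
    define r where "r = (\<lambda>a. ?H $$ (a,a) * (2^k * exp 2 ^ card (monset k a)))"
    have w0: "\<And>x. x \<in> S' \<Longrightarrow> w' x \<ge> 0" using D unfolding is_design_def by auto
    have Hc: "?H \<in> carrier_mat (2^k) (2^k)" by (simp add: Hm_def)
    have Hsym: "?H $$ (i,j) = ?H $$ (j,i)" if "i < 2^k" "j < 2^k" for i j
      using that by (simp add: Hm_def mult_ac)
    have Hpsd: "psdq (2^k) ?H" by (rule Hm_psd[OF w0])
    have h1: "det ?H \<le> (\<Prod>a<2^k. ?H $$ (a,a))" by (rule hadamard_psd[OF Hc Hsym Hpsd])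
    have ee: "exp (-2) ^ c * exp 2 ^ c = (1::real)" for c
    proof -
      have "exp (-2) ^ c * exp 2 ^ c = (exp (-2) * exp (2::real)) ^ c" by (rule power_mult_distrib[symmetric])
      also have "exp (-2) * exp (2::real) = 1" by (simp add: exp_add[symmetric])
      finally show ?thesis by simp
    qed
    have Haa: "?H $$ (a,a) = Dg a * r a" for a
    proof -
      have "Dg a * r a = ?H $$ (a,a) * (exp (-2) ^ card (monset k a) * exp 2 ^ card (monset k a))"
        unfolding Dg_def r_def by (simp add: field_simps)
      then show ?thesis using ee by simp
    qed
    have rnn: "r a \<ge> 0" if "a \<in> {..<2^k}" for a
      unfolding r_def using psdq_diag[OF Hpsd, of a] that by simp
    have rprod: "(\<Prod>a<2^k. r a) \<le> 1"
      by (rule amgm_ln[OF _ rnn]) (use ratio_sum[OF I D] in \<open>simp_all add: r_def\<close>)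
    have Dnn: "0 \<le> (\<Prod>a<2^k. Dg a)" unfolding Dg_def by (rule prod_nonneg) simp
    have "det ?H \<le> (\<Prod>a<2^k. Dg a) * (\<Prod>a<2^k. r a)" using h1 unfolding Haa prod.distrib .
    also have "\<dots> \<le> (\<Prod>a<2^k. Dg a)" using mult_left_mono[OF rprod Dnn] by simp
    also have "\<dots> = det (Hm k \<beta> ?F ?u)" unfolding det_Hstar[OF I] Dg_def ..
    finally have hh: "det ?H \<le> det (Hm k \<beta> ?F ?u)" .
    have "det (info_mat k \<beta> S' w') = (det (Pm k))^2 * det ?H"
      unfolding det_factor by (simp add: power2_eq_square)
    also have "\<dots> \<le> (det (Pm k))^2 * det (Hm k \<beta> ?F ?u)"
      by (rule mult_left_mono[OF hh]) simp
    also have "\<dots> = det (info_mat k \<beta> ?F ?u)"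
      unfolding det_factor by (simp add: power2_eq_square)
    finally show ?thesis .
  qed
  show ?thesis unfolding locally_D_optimal_def using des main by blast
qed

end
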